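(* Let $q(w)=w^4$, $r_1=1$, $r_2=e^{2i\pi/3}$, $r_3=e^{4i\pi/3}$, and let $R>0$. There exist $0<\lambda<1$, $\epsilon_0>0$, $l_0\ge1$ and, for each $i\in\{1,2,3\}$, a family $(U_i^l)_{l\ge l_0}$ of neighborhoods of $r_i$ whose diameters converge exponentially fast to $0$ as $l\to\infty$, such that for each $l\ge l_0$ and each $\alpha\in\mathbb{C}^*$ the map $g_\alpha(z,w):=(\lambda z+\alpha w,q^l(w))$ satisfies $$\overline{(\alpha\epsilon_0^{-1}\mathbb{D})\times(R\mathbb{D}\setminus R^{-1}\mathbb{D})}\subset g_\alpha\Big((\alpha\epsilon_0^{-1}\mathbb{D})\times\textstyle\bigcup_{i=1}^3U_i^l\Big).$$
   Context: $\mathbb{D}$ is the unit disc; $tE=\{tz:z\in E\}$ for $t\in\mathbb{C}^*$, so $\alpha\epsilon_0^{-1}\mathbb{D}$ is the disc of radius $|\alpha|/\epsilon_0$ centered at $0$. *)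

theory Defs
  imports "HOL-Analysis.Analysis"
begin

definition q :: "complex \<Rightarrow> complex" where
  "q w = w ^ 4"

definition root3 :: "nat \<Rightarrow> complex" where
  "root3 i = (if i = 1 then 1 else if i = 2 then exp (2 * pi * \<i> / 3) else exp (4 * pi * \<i> / 3))"

definition g_map :: "real \<Rightarrow> complex \<Rightarrow> nat \<Rightarrow> complex \<times> complex \<Rightarrow> complex \<times> complex" where
  "g_map lam \<alpha> l zw = (of_real lam * fst zw + \<alpha> * snd zw, (q ^^ l) (snd zw))"

end

theory Submission imports Defs "HOL-Complex_Analysis.Complex_Analysis" begin

lemma q_iter: "(q ^^ l) w = w ^ (4 ^ l)"
  by (induction l) (simp_all add: q_def power_mult[symmetric] mult.commute)

lemma root3_1: "root3 1 = 1" by (simp add: root3_def)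
lemma root3_1s: "root3 (Suc 0) = 1" by (simp add: root3_def)

lemma root3_2: "root3 2 = Complex (-1/2) (sqrt 3 / 2)"
  by (simp add: root3_def exp_eq_polar cis.ctr cos_120 sin_120 complex_eq_iff)

lemma root3_3: "root3 3 = Complex (-1/2) (- sqrt 3 / 2)"
proof -
  have e: "4 * pi / 3 = pi/3 + pi" by simp
  have c: "cos (4 * pi / 3) = -1/2" unfolding e cos_add by (simp add: cos_60)
  have s: "sin (4 * pi / 3) = - sqrt 3/2" unfolding e sin_add by (simp add: sin_60)
  show ?thesis
    by (simp add: root3_def exp_eq_polar cis.ctr c s complex_eq_iff)
qed

lemma root3_cases: "i \<in> {1,2,3} \<Longrightarrow> i = 1 \<or> i = 2 \<or> i = 3" by auto

lemma root3_cube: "i \<in> {1,2,3} \<Longrightarrow> root3 i ^ 3 = 1"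
proof -
  have s: "sqrt 3 * sqrt 3 = 3" by simp
  assume "i \<in> {1,2,3}"
  then consider "i = 1" | "i = 2" | "i = 3" by auto
  then show ?thesis
  proof cases
    case 1 then show ?thesis by (simp add: root3_def)
  next
    case 2 then show ?thesis
      by (simp add: root3_2 power3_eq_cube complex_eq_iff algebra_simps s)
  next
    case 3 then show ?thesis
      by (simp add: root3_3 power3_eq_cube complex_eq_iff algebra_simps s)
  qed
qed

lemma root3_norm: "i \<in> {1,2,3} \<Longrightarrow> cmod (root3 i) = 1"
proof -
  have s: "sqrt 3 ^ 2 = 3" by simp
  assume "i \<in> {1,2,3}"
  then consider "i = 1" | "i = 2" | "i = 3" by auto
  then show ?thesis
    by cases (simp_all add: root3_1s root3_2 root3_3 cmod_def power2_eq_square[of "1/2::real"] power_divide s)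
qed

lemma root3_pow: "i \<in> {1,2,3} \<Longrightarrow> root3 i ^ (4 ^ l) = root3 i"
proof -
  assume i: "i \<in> {1,2,3}"
  have "(4::nat) ^ l mod 3 = 1"
    using power_mod[of "4::nat" 3 l] by simp
  then obtain k where "(4::nat) ^ l = 3 * k + 1" by (metis mod_div_mult_eq add.commute mult.commute)
  then show ?thesis using root3_cube[OF i] by (simp add: power_add power_mult)
qed

lemma key:
  assumes "cmod v \<le> 6"
  shows "\<exists>i\<in>{1,2,3}. (cmod (v - root3 i))^2 \<le> 35"
proof -
  obtain x y where v: "v = Complex x y" by (cases v)
  define t where "t = sqrt (x^2 + y^2)"
  have sq: "x^2+y^2 \<le> (\<bar>x\<bar>+\<bar>y\<bar>)^2" by (simp add: power2_sum)
  have t: "t \<le> 6" "t \<ge> 0" "t^2 = x^2+y^2"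
    using assms v by (auto simp: t_def cmod_def)
  have t3: "t \<le> \<bar>x\<bar> + \<bar>y\<bar>" unfolding t_def using sq
    by (metis abs_ge_zero add_nonneg_nonneg real_sqrt_le_iff real_sqrt_abs abs_of_nonneg)
  have s3: "sqrt 3 \<ge> 5/3" by (rule real_le_rsqrt) (simp add: power2_eq_square)
  have s: "sqrt 3 ^ 2 = 3" by simp
  have "t^2 \<le> 6*t" using mult_right_mono[of t 6 t] t by (simp add: power2_eq_square)
  then have q: "t^2 - t/3 + 1 \<le> 35" using t by linarith
  show ?thesis
  proof (cases "x \<ge> \<bar>y\<bar>")
    case True
    have "(cmod (v - root3 1))^2 = x^2+y^2 - 2*x + 1"
      unfolding cmod_power2 by (simp add: v root3_1s power2_eq_square algebra_simps)
    also have "\<dots> \<le> 35" using t t3 q True by (simp add: abs_if split: if_splits)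
    finally show ?thesis by auto
  next
    case False
    show ?thesis
    proof (cases "y \<ge> 0")
      case True
      have "(cmod (v - root3 2))^2 = x^2+y^2 - 2*(-x/2 + sqrt 3/2*y) + 1"
        unfolding cmod_power2 by (simp add: v root3_2 power2_eq_square algebra_simps s)
      also have "\<dots> \<le> 35"
      proof -
        have "5/3*y \<le> sqrt 3*y" by (rule mult_right_mono[OF s3 True])
        then have h5: "sqrt 3/2*y \<ge> 5/6*y" by linarith
        moreover have "t/6 \<le> -x/2 + sqrt 3/2*y"
          proof (cases "x \<ge> 0")
          case True
          then have "t \<le> x + y" using t3 \<open>y \<ge> 0\<close> by simp
          moreover have "x < y" using False \<open>y \<ge> 0\<close> by simp
          ultimately show ?thesis using True h5 by linarith
        next
          case F: False
          then have "t \<le> -x + y" using t3 \<open>y \<ge> 0\<close> by simp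
          then show ?thesis using h5 \<open>y \<ge> 0\<close> F by linarith
        qed
        moreover have "\<And>a::real. t/6 \<le> a \<Longrightarrow> x^2+y^2 - 2*a + 1 \<le> 35" using t(3) q by linarith
        ultimately show ?thesis by blast
      qed
      finally show ?thesis by auto
    next
      case False2: False
      have "(cmod (v - root3 3))^2 = x^2+y^2 - 2*(-x/2 - sqrt 3/2*y) + 1"
        unfolding cmod_power2 by (simp add: v root3_3 power2_eq_square algebra_simps s)
      also have "\<dots> \<le> 35"
      proof -
        have "5/3*(-y) \<le> sqrt 3*(-y)" by (rule mult_right_mono[OF s3]) (use False2 in simp)
        then have h5: "sqrt 3/2*(-y) \<ge> 5/6*(-y)" by linarith
        moreover have "t/6 \<le> -x/2 - sqrt 3/2*y"
          proof (cases "x \<ge> 0")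
          case True
          then have "t \<le> x - y" using t3 False2 by simp
          moreover have "x < -y" using False False2 by simp
          ultimately show ?thesis using True h5 by linarith
        next
          case F: False
          then have "t \<le> -x - y" using t3 False2 by simp
          then show ?thesis using h5 False2 F by linarith
        qed
        moreover have "\<And>a::real. t/6 \<le> a \<Longrightarrow> x^2+y^2 - 2*a + 1 \<le> 35" using t(3) q by linarith
        ultimately show ?thesis by blast
      qed
      finally show ?thesis by auto
    qed
  qed
qed


lemma preimage:
  assumes i: "i \<in> {1,2,3}" and R: "R > 0" and w1: "1/R \<le> cmod w'" and w2: "cmod w' \<le> R"
    and small: "(\<bar>ln R\<bar> + pi) / 4^l \<le> 1/2"
  shows "\<exists>w. w^(4^l) = w' \<and> cmod (w - root3 i) \<le> 3/2 * ((\<bar>ln R\<bar> + pi) / 4^l)"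
proof -
  define K where "K = \<bar>ln R\<bar> + pi"
  have r1: "cmod (root3 i) = 1" by (rule root3_norm[OF i])
  have r0: "root3 i \<noteq> 0" using r1 by auto
  have w0: "w' \<noteq> 0" using w1 R by auto
  define u where "u = w' / root3 i"
  have u0: "u \<noteq> 0" using w0 r0 by (simp add: u_def)
  have nu: "cmod u = cmod w'" by (simp add: u_def norm_divide r1)
  define N where "N = (4::nat)^l"
  have N0: "N > 0" by (simp add: N_def)
  define s where "s = Ln u / of_nat N"
  define w where "w = root3 i * exp s"
  have "w ^ N = root3 i ^ N * exp (of_nat N * s)"
    by (simp add: w_def power_mult_distrib exp_of_nat_mult)
  also have "\<dots> = root3 i * u" using N0 by (simp add: s_def N_def root3_pow[OF i] u0)
  also have "\<dots> = w'" using r0 by (simp add: u_def)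
  finally have e: "w ^ (4^l) = w'" by (simp add: N_def)
  have "\<bar>ln (cmod w')\<bar> \<le> \<bar>ln R\<bar>"
  proof -
    have a: "ln (cmod w') \<le> ln R" using w2 w0 R by simp
    have "ln (1/R) \<le> ln (cmod w')" using w1 R by (intro ln_mono) simp_all
    then have b: "- ln R \<le> ln (cmod w')" using R by (simp add: ln_div)
    show ?thesis using a b by linarith
  qed
  moreover have "\<bar>Im (Ln u)\<bar> \<le> pi" using mpi_less_Im_Ln[OF u0] Im_Ln_le_pi[OF u0] by linarith
  ultimately have "cmod (Ln u) \<le> K"
    using cmod_le[of "Ln u"] u0 nu by (simp add: K_def)
  then have sK: "cmod s \<le> K / 4^l" by (simp add: s_def N_def norm_divide norm_power divide_right_mono)
  then have "cmod s \<le> 1/2" using small unfolding K_def by linarith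
  then have "cmod (exp s - 1) \<le> 3/2 * cmod s" by (rule norm_exp_bounds(2))
  moreover have "cmod (w - root3 i) = cmod (exp s - 1)"
    proof -
    have "w - root3 i = root3 i * (exp s - 1)" by (simp add: w_def algebra_simps)
    then show ?thesis by (simp add: norm_mult r1)
  qed
  ultimately have "cmod (w - root3 i) \<le> 3/2 * (K/4^l)" using sK by linarith
  with e show ?thesis unfolding K_def by blast
qed


theorem lemma6p1:
  fixes R :: real
  assumes "R > 0"
  shows "\<exists>(lam::real) (\<epsilon>0::real) (l0::nat) (U :: nat \<Rightarrow> nat \<Rightarrow> complex set).
           0 < lam \<and> lam < 1 \<and> \<epsilon>0 > 0 \<and> l0 \<ge> 1 \<and>
           (\<forall>i\<in>{1,2,3}. \<forall>l\<ge>l0. \<exists>V. open V \<and> root3 i \<in> V \<and> V \<subseteq> U i l) \<and>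
           (\<forall>i\<in>{1,2,3}. \<exists>C \<theta>. C > 0 \<and> 0 < \<theta> \<and> \<theta> < 1 \<and>
              (\<forall>l\<ge>l0. bounded (U i l) \<and> diameter (U i l) \<le> C * \<theta> ^ l)) \<and>
           (\<forall>l\<ge>l0. \<forall>\<alpha>::complex. \<alpha> \<noteq> 0 \<longrightarrow>
              closure (ball 0 (cmod \<alpha> / \<epsilon>0) \<times> (ball 0 R - ball 0 (1 / R)))
                \<subseteq> g_map lam \<alpha> l ` (ball 0 (cmod \<alpha> / \<epsilon>0) \<times> (\<Union>i\<in>{1,2,3}. U i l)))"
proof -
  define K where "K = \<bar>ln R\<bar> + pi"
  have K0: "K > 0" unfolding K_def using pi_gt_zero by linarith
  obtain n :: nat where n: "50 * K < real n" using reals_Archimedean2 by blast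
  define l0 where "l0 = max 1 n"
  have l01: "l0 \<ge> 1" by (simp add: l0_def)
  have big: "50 * K \<le> 4^l" if "l \<ge> l0" for l :: nat
  proof -
    have "l < 2^l" by (rule less_exp)
    also have "(2::nat)^l \<le> 4^l" by (rule power_mono) simp_all
    finally have "real l \<le> real (4^l)" by (simp only: of_nat_le_iff less_imp_le)
    then have "real l \<le> 4^l" by simp
    moreover have "real n \<le> real l" using that by (simp add: l0_def)
    ultimately show ?thesis using n by linarith
  qed
  define U where "U = (\<lambda>(i::nat) (l::nat). cball (root3 i) (2*K/4^l))"
  show ?thesis
  proof (rule exI[of _ "199/200::real"], rule exI[of _ "1/6::real"], rule exI[of _ l0], rule exI[of _ U], intro conjI)
    show "0 < (199/200::real)" "(199/200::real) < 1" "(1/6::real) > 0" "l0 \<ge> 1" using l01 by simp_all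
    show "\<forall>i\<in>{1,2,3}. \<forall>l\<ge>l0. \<exists>V. open V \<and> root3 i \<in> V \<and> V \<subseteq> U i l"
    proof (intro ballI allI impI)
      fix i l
      show "\<exists>V. open V \<and> root3 i \<in> V \<and> V \<subseteq> U i l"
        by (rule exI[of _ "ball (root3 i) (2*K/4^l)"]) (use K0 in \<open>auto simp: U_def\<close>)
    qed
    show "\<forall>i\<in>{1,2,3}. \<exists>C \<theta>. C > 0 \<and> 0 < \<theta> \<and> \<theta> < 1 \<and>
              (\<forall>l\<ge>l0. bounded (U i l) \<and> diameter (U i l) \<le> C * \<theta> ^ l)"
    proof (intro ballI)
      fix i :: nat
      have diam: "bounded (U i l) \<and> diameter (U i l) \<le> 4*K*(1/4)^l" for l
        using K0 by (simp add: U_def power_one_over)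
      show "\<exists>C \<theta>. C > 0 \<and> 0 < \<theta> \<and> \<theta> < 1 \<and>
              (\<forall>l\<ge>l0. bounded (U i l) \<and> diameter (U i l) \<le> C * \<theta> ^ l)"
        by (rule exI[of _ "4*K"], rule exI[of _ "1/4::real"]) (use K0 diam in auto)
    qed
    show "\<forall>l\<ge>l0. \<forall>\<alpha>::complex. \<alpha> \<noteq> 0 \<longrightarrow>
              closure (ball 0 (cmod \<alpha> / (1/6)) \<times> (ball 0 R - ball 0 (1 / R)))
                \<subseteq> g_map (199/200) \<alpha> l ` (ball 0 (cmod \<alpha> / (1/6)) \<times> (\<Union>i\<in>{1,2,3}. U i l))"
    proof (intro allI impI subsetI)
      fix l :: nat and \<alpha> :: complex and p :: "complex \<times> complex"
      assume l: "l \<ge> l0" and a0: "\<alpha> \<noteq> 0"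
        and p: "p \<in> closure (ball 0 (cmod \<alpha> / (1/6)) \<times> (ball 0 R - ball 0 (1 / R)))"
      have M: "cmod \<alpha> / (1/6) = 6 * cmod \<alpha>" by simp
      have Mpos: "6 * cmod \<alpha> > 0" using a0 by simp
      obtain z' w' :: complex where pz: "p = (z', w')" by (cases p)
      have cl: "closure (ball 0 R - ball 0 (1 / R)) \<subseteq> cball 0 R \<inter> - ball 0 (1/R)"
        by (rule closure_minimal) (auto intro: closed_Int closed_Compl)
      from p have z'0: "z' \<in> closure (ball 0 (6 * cmod \<alpha>))" and w'1: "w' \<in> closure (ball 0 R - ball 0 (1 / R))"
        unfolding pz M closure_Times by auto
      have z'1: "z' \<in> cball 0 (6 * cmod \<alpha>)" using z'0 Mpos by (subst (asm) closure_ball) auto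
      from w'1 cl have w1: "1/R \<le> cmod w'" and w2: "cmod w' \<le> R" by auto
      define v where "v = z' / \<alpha>"
      have v6: "cmod v \<le> 6" using z'1 a0 by (simp add: v_def norm_divide divide_le_eq)
      obtain i where i: "i \<in> {1,2,3}" and vi: "(cmod (v - root3 i))^2 \<le> 35" using key[OF v6] by blast
      have vi2: "cmod (v - root3 i) \<le> 592/100"
        by (rule power2_le_imp_le) (use vi in \<open>simp_all add: power2_eq_square\<close>)
      have bl: "50 * K \<le> 4^l" by (rule big[OF l])
      have small: "(\<bar>ln R\<bar> + pi) / 4^l \<le> 1/2" using bl K0 by (simp add: K_def[symmetric] divide_le_eq)
      obtain w where w: "w^(4^l) = w'" and wr: "cmod (w - root3 i) \<le> 3/2 * ((\<bar>ln R\<bar> + pi) / 4^l)"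
        using preimage[OF i assms w1 w2 small] by blast
      have kk: "K / 4^l \<le> 1/50" using bl K0 by (simp add: divide_le_eq)
      have wr2: "cmod (w - root3 i) \<le> 3/100" using wr[folded K_def] kk by linarith
      have "K / 4^l \<ge> 0" using K0 by simp
      then have "cmod (w - root3 i) \<le> 2 * K / 4^l" using wr[folded K_def] by linarith
      then have wU: "w \<in> U i l" by (simp add: U_def dist_norm norm_minus_commute)
      define z where "z = (z' - \<alpha> * w) / of_real (199/200)"
      have vw: "cmod (v - w) \<le> 595/100"
        using norm_triangle_ineq[of "v - root3 i" "root3 i - w"] vi2 wr2 by (simp add: norm_minus_commute)
      have "z' - \<alpha> * w = \<alpha> * (v - w)" using a0 by (simp add: v_def algebra_simps)
      then have "cmod z = cmod \<alpha> * cmod (v - w) / (199/200)" by (simp add: z_def norm_mult norm_divide)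
      also have "\<dots> \<le> cmod \<alpha> * (595/100) / (199/200)"
        using vw by (intro divide_right_mono mult_left_mono) simp_all
      also have "\<dots> < 6 * cmod \<alpha>" using a0 by simp
      finally have zb: "z \<in> ball 0 (cmod \<alpha> / (1/6))" by (simp add: M)
      have "p = g_map (199/200) \<alpha> l (z, w)"
        by (simp add: pz g_map_def z_def q_iter w field_simps)
      then show "p \<in> g_map (199/200) \<alpha> l ` (ball 0 (cmod \<alpha> / (1/6)) \<times> (\<Union>i\<in>{1,2,3}. U i l))"
        using zb wU i by blast
    qed
  qed
qed

end
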